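(* Let $D$ be a Dyck path in the $n\times n$ lattice square and write the expansion of $LLT_D[X;1+q]$ in the elementary basis as $LLT_D[X;1+q]=\sum_{\mu\vdash n}P_\mu(q)\,e_\mu[X]$. Then $$\sum_{\mu\vdash n}P_\mu(q)=(1+q)^{\mathrm{dinv}(D)}.$$
   Context: A Dyck path $D$ in the $n\times n$ lattice square goes from $(0,0)$ to $(n,n)$ by unit North and East steps and stays weakly above the diagonal $y=x$. For $i=1,\dots,n$, let $a_i$ be the number of full lattice cells in row $i$ strictly between $D$ and the diagonal. A parking function $PF$ supported by $D$ is a bijective labeling of the $n$ cells immediately to the right of the North steps of $D$ by "cars" $1,\dots,n$, such that labels increase from bottom to top within each column. Let $c_i$ be the car in row $i$; it lies on diagonal $a_i$. A pair of rows $i<j$ contributes a primary dinv if $a_i=a_j$ and $c_i<c_j$, and a secondary dinv if $a_i=a_j+1$ and $c_i>c_j$. $\mathrm{dinv}(PF)$ is the total number of primary and secondary dinvs. The word $\sigma(PF)$ is the permutation obtained by reading the cars diagonal by diagonal, from the highest diagonal to the lowest, and within each diagonal from right to left. $\mathrm{pides}(PF)$ is the composition of $n$ encoding the descent set of $\sigma(PF)^{-1}$. $F_\alpha[X]$ is Gessel's fundamental quasisymmetric function indexed by the composition $\alpha$. The LLT polynomial of $D$ is $LLT_D[X;q]=\sum_{PF}q^{\mathrm{dinv}(PF)}F_{\mathrm{pides}(PF)}[X]$, summed over all parking functions supported by $D$; it is a symmetric function. $\mathrm{dinv}(D)$ is defined as $\mathrm{dinv}(PF)$ for the parking function $PF$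 supported by $D$ with $\sigma(PF)=n\cdots321$. *)

theory Defs
  imports "HOL-Library.Multiset" "HOL-Computational_Algebra.Polynomial"
begin

text \<open>A monomial x_{i1} ... x_{ik} in the variables x_0, x_1, ... is encoded by the
multiset of its variable indices. A (quasi)symmetric function is given by its
coefficient function on monomials.\<close>

type_synonym 'a sfun = "nat multiset \<Rightarrow> 'a"

definition sf_one :: "'a::comm_semiring_1 sfun" where
  "sf_one M = (if M = {#} then 1 else 0)"

definition sf_mult :: "'a::comm_semiring_1 sfun \<Rightarrow> 'a sfun \<Rightarrow> 'a sfun" where
  "sf_mult f g M = (\<Sum>A\<in>{A. A \<subseteq># M}. f A * g (M - A))"

definition comp_set :: "nat list \<Rightarrow> nat set" where
  "comp_set \<alpha> = set (map (\<lambda>k. sum_list (take k \<alpha>)) [1..<length \<alpha>])"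

definition gessel_F :: "nat list \<Rightarrow> 'a::comm_semiring_1 sfun" where
  "gessel_F \<alpha> M = of_nat (card {w :: nat list. length w = sum_list \<alpha> \<and> sorted w \<and>
      (\<forall>j\<in>comp_set \<alpha>. w ! (j - 1) < w ! j) \<and> mset w = M})"

definition elem_sym :: "nat \<Rightarrow> 'a::comm_semiring_1 sfun" where
  "elem_sym k M = of_nat (card {w :: nat list. length w = k \<and> sorted_wrt (<) w \<and> mset w = M})"

definition elem_sym_part :: "nat list \<Rightarrow> 'a::comm_semiring_1 sfun" where
  "elem_sym_part \<mu> = foldr sf_mult (map elem_sym \<mu>) sf_one"

definition partitions :: "nat \<Rightarrow> nat list set" where
  "partitions n = {\<mu>. sum_list \<mu> = n \<and> (\<forall>x\<in>set \<mu>. 0 < x) \<and> sorted_wrt (\<ge>) \<mu>}"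

text \<open>Composition of n with given descent set S (subset of {1..n-1}).\<close>
definition comp_of_set :: "nat \<Rightarrow> nat set \<Rightarrow> nat list" where
  "comp_of_set n S = (if n = 0 then [] else
     (let ps = sorted_list_of_set S @ [n] in map2 (-) ps (0 # ps)))"

text \<open>A path is a list of steps, True = North, False = East.\<close>
definition dyck_path :: "nat \<Rightarrow> bool list \<Rightarrow> bool" where
  "dyck_path n D \<longleftrightarrow> length D = 2 * n \<and> length (filter id D) = n \<and>
     (\<forall>k\<le>length D. length (filter Not (take k D)) \<le> length (filter id (take k D)))"

fun xcoord_aux :: "nat \<Rightarrow> bool list \<Rightarrow> nat list" where
  "xcoord_aux e [] = []"
| "xcoord_aux e (True # s) = e # xcoord_aux e s"
| "xcoord_aux e (False # s) = xcoord_aux (Suc e) s"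

text \<open>x-coordinate of the r-th North step (rows indexed 0..n-1; row r is row r+1 of the paper).\<close>
definition xcoord :: "bool list \<Rightarrow> nat list" where
  "xcoord D = xcoord_aux 0 D"

text \<open>a_i: number of full cells in the row strictly between D and the diagonal.\<close>
definition area :: "bool list \<Rightarrow> nat list" where
  "area D = map (\<lambda>(r, x). r - x) (zip [0..<length (xcoord D)] (xcoord D))"

text \<open>Parking functions supported by D: c ! r is the car in row r.\<close>
definition parking_functions :: "nat \<Rightarrow> bool list \<Rightarrow> nat list set" where
  "parking_functions n D = {c. length c = n \<and> distinct c \<and> set c = {1..n} \<and>
     (\<forall>i j. i < j \<and> j < n \<and> xcoord D ! i = xcoord D ! j \<longrightarrow> c ! i < c ! j)}"

definition dinv_pf :: "nat \<Rightarrow> bool list \<Rightarrow> nat list \<Rightarrow> nat" where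
  "dinv_pf n D c = card {(i, j). i < j \<and> j < n \<and>
     ((area D ! i = area D ! j \<and> c ! i < c ! j) \<or>
      (area D ! i = area D ! j + 1 \<and> c ! i > c ! j))}"

text \<open>Reading word: diagonals from highest to lowest, each read right to left
 (i.e. by decreasing row).\<close>
definition sigma_pf :: "nat \<Rightarrow> bool list \<Rightarrow> nat list \<Rightarrow> nat list" where
  "sigma_pf n D c = concat (map (\<lambda>k. rev [c ! i. i \<leftarrow> [0..<n], area D ! i = k]) (rev [0..<n]))"

definition pos_in :: "nat list \<Rightarrow> nat \<Rightarrow> nat" where
  "pos_in w v = (LEAST p. p < length w \<and> w ! p = v)"

text \<open>pides: composition encoding the descent set of sigma^{-1}.\<close>
definition pides :: "nat \<Rightarrow> bool list \<Rightarrow> nat list \<Rightarrow> nat list" where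
  "pides n D c = comp_of_set n
     {i. 1 \<le> i \<and> i < n \<and> pos_in (sigma_pf n D c) i > pos_in (sigma_pf n D c) (i + 1)}"

definition dinv_path :: "nat \<Rightarrow> bool list \<Rightarrow> nat" where
  "dinv_path n D = dinv_pf n D (THE c. c \<in> parking_functions n D \<and> sigma_pf n D c = rev [1..<n+1])"

definition LLT :: "nat \<Rightarrow> bool list \<Rightarrow> int poly sfun" where
  "LLT n D M = (\<Sum>c\<in>parking_functions n D. monom 1 (dinv_pf n D c) * gessel_F (pides n D c) M)"

definition LLT_shift :: "nat \<Rightarrow> bool list \<Rightarrow> int poly sfun" where
  "LLT_shift n D M = pcompose (LLT n D M) [:1, 1:]"

end

theory Submission
  imports Defs
begin



function Lf :: "nat \<Rightarrow> 'a::comm_ring_1 sfun \<Rightarrow> 'a" where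
 "Lf n f = (if n = 0 then f {#} else
    (\<Sum>a\<in>{1..n}. (-1)^(a-1) * Lf (n-a) (\<lambda>N. f (replicate_mset a 0 + image_mset Suc N))))"
  by pat_completeness auto
termination by (relation "measure fst") auto

declare Lf.simps[simp del]

lemma Lf_sum: "finite X \<Longrightarrow> Lf n (\<lambda>M. \<Sum>x\<in>X. g x M) = (\<Sum>x\<in>X. Lf n (g x))"
proof (induction n arbitrary: g rule: less_induct)
  case (less n)
  show ?case
  proof (cases "n = 0")
    case True then show ?thesis by (simp add: Lf.simps)
  next
    case False
    have "Lf n (\<lambda>M. \<Sum>x\<in>X. g x M) = (\<Sum>a\<in>{1..n}. (-1)^(a-1) *
       (\<Sum>x\<in>X. Lf (n-a) (\<lambda>N. g x (replicate_mset a 0 + image_mset Suc N))))"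
      using False less by (subst Lf.simps) (auto intro!: sum.cong)
    also have "\<dots> = (\<Sum>x\<in>X. Lf n (g x))"
      using False by (subst (2) Lf.simps) (simp add: sum_distrib_left sum.swap[of _ X])
    finally show ?thesis .
  qed
qed

lemma Lf_mult: "Lf n (\<lambda>M. p * f M) = p * Lf n f"
proof (induction n arbitrary: f rule: less_induct)
  case (less n)
  show ?case
  proof (cases "n = 0")
    case True then show ?thesis by (simp add: Lf.simps)
  next
    case False
    then show ?thesis using less
      by (subst (1 2) Lf.simps) (simp add: sum_distrib_left mult.left_commute)
  qed
qed

lemma Lf_cong: "(\<And>M. f M = g M) \<Longrightarrow> Lf n f = Lf n g"
  by (metis ext)




definition RR :: "nat \<Rightarrow> nat multiset \<Rightarrow> nat multiset" where
  "RR a N = replicate_mset a 0 + image_mset Suc N"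

lemma count_image_Suc: "count (image_mset Suc N) y = (if y = 0 then 0 else count N (y - 1))"
  by (induction N) auto

lemma count_RR: "count (RR a N) y = (if y = 0 then a else count N (y - 1))"
  by (simp add: RR_def count_image_Suc)

lemma RR_eq_iff: "RR a N = RR b B \<longleftrightarrow> a = b \<and> N = B"
proof
  assume h: "RR a N = RR b B"
  have "a = b" using arg_cong[OF h, of "\<lambda>M. count M 0"] by (simp add: count_RR)
  moreover have "N = B"
  proof (rule multiset_eqI)
    fix x show "count N x = count B x"
      using arg_cong[OF h, of "\<lambda>M. count M (Suc x)"] by (simp add: count_RR)
  qed
  ultimately show "a = b \<and> N = B" by simp
qed simp

lemma finite_submsets: "finite {A. A \<subseteq># (M::'a multiset)}"
proof -
  have "{A. A \<subseteq># M} \<subseteq> mset ` {xs. set xs \<subseteq> set_mset M \<and> length xs \<le> size M}"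
  proof
    fix A assume "A \<in> {A. A \<subseteq># M}"
    then have A: "A \<subseteq># M" by simp
    obtain xs where xs: "mset xs = A" using ex_mset by blast
    have "set xs \<subseteq> set_mset M" using A xs by (metis set_mset_mono set_mset_mset)
    moreover have "length xs \<le> size M" using A xs by (metis size_mset size_mset_mono)
    ultimately show "A \<in> mset ` {xs. set xs \<subseteq> set_mset M \<and> length xs \<le> size M}"
      using xs by blast
  qed
  moreover have "finite {xs. set xs \<subseteq> set_mset M \<and> length xs \<le> size M}"
    by (rule finite_lists_length_le) simp
  ultimately show ?thesis by (meson finite_imageI finite_subset)
qed

lemma RR_decomp: "A = RR (count A 0) (image_mset (\<lambda>x. x - 1) (filter_mset (\<lambda>x. 0 < x) A))"
proof (rule multiset_eqI)
  fix y
  show "count A y = count (RR (count A 0) (image_mset (\<lambda>x. x - 1) (filter_mset (\<lambda>x. 0 < x) A))) y"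
  proof (cases y)
    case 0 then show ?thesis by (simp add: count_RR)
  next
    case (Suc z)
    have "count (image_mset (\<lambda>x. x - 1) (filter_mset (\<lambda>x. 0 < x) A)) z = count A (Suc z)"
    proof -
      have "image_mset Suc (image_mset (\<lambda>x. x - 1) (filter_mset (\<lambda>x. 0 < x) A)) = filter_mset (\<lambda>x. 0 < x) A"
        by (induction A) auto
      then have "count (image_mset Suc (image_mset (\<lambda>x. x - 1) (filter_mset (\<lambda>x. 0 < x) A))) (Suc z) = count A (Suc z)"
        by simp
      then show ?thesis by (simp add: count_image_Suc)
    qed
    then show ?thesis using Suc by (simp add: count_RR)
  qed
qed

lemma subset_RR: "A \<subseteq># RR a N \<longleftrightarrow> (\<exists>b B. A = RR b B \<and> b \<le> a \<and> B \<subseteq># N)"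
proof
  assume h: "A \<subseteq># RR a N"
  define b where "b = count A 0"
  define B where "B = image_mset (\<lambda>x. x - 1) (filter_mset (\<lambda>x. 0 < x) A)"
  have A: "A = RR b B" unfolding b_def B_def by (rule RR_decomp)
  have "\<forall>y. count (RR b B) y \<le> count (RR a N) y" using h A by (simp add: subseteq_mset_def)
  then have "b \<le> a \<and> (\<forall>y. count B y \<le> count N y)"
    by (metis count_RR nat.distinct(1) diff_Suc_1)
  then show "\<exists>b B. A = RR b B \<and> b \<le> a \<and> B \<subseteq># N" using A by (auto simp: subseteq_mset_def)
next
  assume "\<exists>b B. A = RR b B \<and> b \<le> a \<and> B \<subseteq># N"
  then show "A \<subseteq># RR a N"
    by (auto simp: subseteq_mset_def count_RR)
qed

lemma RR_diff: "b \<le> a \<Longrightarrow> B \<subseteq># N \<Longrightarrow> RR a N - RR b B = RR (a - b) (N - B)"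
  by (rule multiset_eqI) (auto simp: count_RR)

lemma sum_submsets_RR:
  "(\<Sum>A\<in>{A. A \<subseteq># RR a N}. g A) = (\<Sum>b\<in>{0..a}. \<Sum>B\<in>{B. B \<subseteq># N}. g (RR b B))"
proof -
  have bij: "bij_betw (\<lambda>(b, B). RR b B) (SIGMA b:{0..a}. {B. B \<subseteq># N}) {A. A \<subseteq># RR a N}"
    unfolding bij_betw_def
  proof
    show "inj_on (\<lambda>(b, B). RR b B) (SIGMA b:{0..a}. {B. B \<subseteq># N})"
      by (auto simp: inj_on_def RR_eq_iff)
    show "(\<lambda>(b, B). RR b B) ` (SIGMA b:{0..a}. {B. B \<subseteq># N}) = {A. A \<subseteq># RR a N}"
      using subset_RR by fastforce
  qed
  have "(\<Sum>A\<in>{A. A \<subseteq># RR a N}. g A) = (\<Sum>x\<in>(SIGMA b:{0..a}. {B. B \<subseteq># N}). g ((\<lambda>(b, B). RR b B) x))"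
    using sum.reindex_bij_betw[OF bij, of g] by simp
  also have "\<dots> = (\<Sum>b\<in>{0..a}. \<Sum>B\<in>{B. B \<subseteq># N}. g (RR b B))"
    unfolding sum.cartesian_product by (rule sum.cong) auto
  finally show ?thesis .
qed




lemma distinct_iff_count: "distinct w \<longleftrightarrow> (\<forall>x. count (mset w) x \<le> 1)"
proof
  assume "distinct w" then show "\<forall>x. count (mset w) x \<le> 1"
    by (simp add: distinct_count_atmost_1)
next
  assume h: "\<forall>x. count (mset w) x \<le> 1"
  show "distinct w" unfolding distinct_count_atmost_1
  proof
    fix a show "count (mset w) a = (if a \<in> set w then 1 else 0)"
    proof (cases "a \<in> set w")
      case True
      then have "count (mset w) a \<noteq> 0" by simp
      then have "count (mset w) a = 1" using h[rule_format, of a] by linarith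
      then show ?thesis using True by simp
    next
      case False then show ?thesis by simp
    qed
  qed
qed

lemma elem_sym_char:
  "elem_sym k A = (if (\<forall>x. count A x \<le> 1) \<and> size A = k then 1 else 0)"
proof (cases "(\<forall>x. count A x \<le> 1) \<and> size A = k")
  case True
  have "{w :: nat list. length w = k \<and> sorted_wrt (<) w \<and> mset w = A} = {sorted_list_of_multiset A}"
  proof (intro equalityI subsetI)
    fix w assume "w \<in> {w :: nat list. length w = k \<and> sorted_wrt (<) w \<and> mset w = A}"
    then have s: "sorted w" and m: "mset w = A" by (auto simp: strict_sorted_iff)
    have "sorted_list_of_multiset A = w"
      by (subst m[symmetric]) (simp add: sorted_sort_id s)
    then show "w \<in> {sorted_list_of_multiset A}" by simp
  next
    fix w assume "w \<in> {sorted_list_of_multiset A}"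
    then have w: "w = sorted_list_of_multiset A" by simp
    have m: "mset w = A" using w by simp
    have "distinct w" unfolding distinct_iff_count m using True by simp
    moreover have "sorted w" using w by simp
    moreover have "length w = k" using True m by (metis size_mset)
    ultimately show "w \<in> {w :: nat list. length w = k \<and> sorted_wrt (<) w \<and> mset w = A}"
      using m by (simp add: strict_sorted_iff)
  qed
  then show ?thesis using True by (simp add: elem_sym_def)
next
  case False
  have e: "{w :: nat list. length w = k \<and> sorted_wrt (<) w \<and> mset w = A} = {}"
  proof (rule ccontr)
    assume "{w :: nat list. length w = k \<and> sorted_wrt (<) w \<and> mset w = A} \<noteq> {}"
    then obtain w where w: "length w = k" "sorted_wrt (<) w" "mset w = A" by auto
    then have "distinct w" by (simp add: strict_sorted_iff)
    then have "\<forall>x. count A x \<le> 1" using w(3) by (simp add: distinct_iff_count)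
    moreover have "size A = k" using w by auto
    ultimately show False using False by simp
  qed
  show ?thesis using False unfolding elem_sym_def e by simp
qed




lemma elem_sym_RR:
  "elem_sym k (RR b B) = (if b \<le> 1 \<and> b \<le> k then elem_sym (k - b) B else 0)"
proof -
  have c: "(\<forall>x. count (RR b B) x \<le> 1) \<longleftrightarrow> b \<le> 1 \<and> (\<forall>x. count B x \<le> 1)"
  proof
    assume h: "\<forall>x. count (RR b B) x \<le> 1"
    have "b \<le> 1" using h[rule_format, of 0] by (simp add: count_RR)
    moreover have "\<forall>x. count B x \<le> 1"
    proof
      fix x show "count B x \<le> 1" using h[rule_format, of "Suc x"] by (simp add: count_RR)
    qed
    ultimately show "b \<le> 1 \<and> (\<forall>x. count B x \<le> 1)" by simp
  next
    assume h: "b \<le> 1 \<and> (\<forall>x. count B x \<le> 1)"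
    show "\<forall>x. count (RR b B) x \<le> 1"
    proof
      fix x show "count (RR b B) x \<le> 1" using h by (cases x) (auto simp: count_RR)
    qed
  qed
  have s: "size (RR b B) = b + size B" by (simp add: RR_def)
  show ?thesis unfolding elem_sym_char c s by auto
qed

lemma sf_one_RR: "sf_one (RR a N) = (if a = 0 then sf_one N else 0)"
proof -
  have "RR a N = {#} \<longleftrightarrow> a = 0 \<and> N = {#}" by (auto simp: RR_def)
  then show ?thesis by (auto simp: sf_one_def)
qed

definition Dset :: "nat list \<Rightarrow> nat list set" where
  "Dset \<mu> = {\<delta>. list_all2 (\<lambda>d k. d \<le> 1 \<and> d \<le> k) \<delta> \<mu>}"

lemma Dset_Nil: "Dset [] = {[]}"
  by (auto simp: Dset_def)

lemma Dset_Cons: "Dset (k # \<mu>) = (\<lambda>(b, \<delta>). b # \<delta>) ` ({b. b \<le> 1 \<and> b \<le> k} \<times> Dset \<mu>)"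
  by (auto simp: Dset_def list_all2_Cons2)

lemma finite_Dset: "finite (Dset \<mu>)"
proof (induction \<mu>)
  case Nil then show ?case by (simp add: Dset_Nil)
next
  case (Cons k \<mu>)
  have "finite {b::nat. b \<le> 1 \<and> b \<le> k}" by simp
  then show ?case unfolding Dset_Cons using Cons by blast
qed

lemma sum_Dset_Cons:
  "(\<Sum>\<delta>\<in>Dset (k # \<mu>). h \<delta>) = (\<Sum>b\<in>{b. b \<le> 1 \<and> b \<le> k}. \<Sum>\<delta>\<in>Dset \<mu>. h (b # \<delta>))"
proof -
  have inj: "inj_on (\<lambda>(b, \<delta>). b # \<delta>) ({b. b \<le> 1 \<and> b \<le> (k::nat)} \<times> Dset \<mu>)"
    by (auto simp: inj_on_def)
  have "(\<Sum>\<delta>\<in>Dset (k # \<mu>). h \<delta>) = (\<Sum>x\<in>{b. b \<le> 1 \<and> b \<le> k} \<times> Dset \<mu>. h ((\<lambda>(b, \<delta>). b # \<delta>) x))"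
    unfolding Dset_Cons using sum.reindex[OF inj, of h] by (simp add: o_def)
  also have "\<dots> = (\<Sum>b\<in>{b. b \<le> 1 \<and> b \<le> k}. \<Sum>\<delta>\<in>Dset \<mu>. h (b # \<delta>))"
    unfolding sum.cartesian_product by (rule sum.cong) auto
  finally show ?thesis .
qed




lemma esp_Nil: "elem_sym_part [] = sf_one"
  by (simp add: elem_sym_part_def)

lemma esp_Cons: "elem_sym_part (k # \<mu>) = sf_mult (elem_sym k) (elem_sym_part \<mu>)"
  by (simp add: elem_sym_part_def)

lemma sum_if_const: "(\<Sum>x\<in>A. if P then f x else 0) = (if P then sum f A else 0)"
  by (cases P) simp_all

lemma esp_RR:
  "elem_sym_part \<mu> (RR a N) =
     (\<Sum>\<delta>\<in>Dset \<mu>. if sum_list \<delta> = a then elem_sym_part (map2 (-) \<mu> \<delta>) N else (0::'a::comm_ring_1))"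
proof (induction \<mu> arbitrary: a N)
  case Nil
  show ?case by (simp add: esp_Nil Dset_Nil sf_one_RR)
next
  case (Cons k \<mu>)
  define X where "X b \<delta> = (elem_sym_part ((k - b) # map2 (-) \<mu> \<delta>) N :: 'a)" for b \<delta>
  define G where "G b = (\<Sum>\<delta>\<in>Dset \<mu>. if b \<le> 1 \<and> b \<le> k \<and> b + sum_list \<delta> = a then X b \<delta> else 0)" for b
  have "(elem_sym_part (k # \<mu>) (RR a N) :: 'a) =
     (\<Sum>A\<in>{A. A \<subseteq># RR a N}. elem_sym k A * elem_sym_part \<mu> (RR a N - A))"
    by (simp add: esp_Cons sf_mult_def)
  also have "\<dots> = (\<Sum>b\<in>{0..a}. \<Sum>B\<in>{B. B \<subseteq># N}. elem_sym k (RR b B) * elem_sym_part \<mu> (RR a N - RR b B))"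
    by (rule sum_submsets_RR)
  also have "\<dots> = (\<Sum>b\<in>{0..a}. \<Sum>B\<in>{B. B \<subseteq># N}.
        (if b \<le> 1 \<and> b \<le> k then elem_sym (k - b) B else 0) *
        (\<Sum>\<delta>\<in>Dset \<mu>. if sum_list \<delta> = a - b then elem_sym_part (map2 (-) \<mu> \<delta>) (N - B) else 0))"
    apply (intro sum.cong refl)
    apply (simp add: RR_diff elem_sym_RR)
    apply (subst Cons.IH)
    apply simp
    done
  also have "\<dots> = (\<Sum>b\<in>{0..a}. \<Sum>\<delta>\<in>Dset \<mu>. if b \<le> 1 \<and> b \<le> k \<and> sum_list \<delta> = a - b then
        (\<Sum>B\<in>{B. B \<subseteq># N}. elem_sym (k - b) B * elem_sym_part (map2 (-) \<mu> \<delta>) (N - B)) else 0)"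
  proof (intro sum.cong refl)
    fix b
    have "(\<Sum>B\<in>{B. B \<subseteq># N}.
        (if b \<le> 1 \<and> b \<le> k then elem_sym (k - b) B else 0) *
        (\<Sum>\<delta>\<in>Dset \<mu>. if sum_list \<delta> = a - b then elem_sym_part (map2 (-) \<mu> \<delta>) (N - B) else (0::'a)))
      = (\<Sum>B\<in>{B. B \<subseteq># N}. \<Sum>\<delta>\<in>Dset \<mu>. if b \<le> 1 \<and> b \<le> k \<and> sum_list \<delta> = a - b then
          elem_sym (k - b) B * elem_sym_part (map2 (-) \<mu> \<delta>) (N - B) else 0)"
      by (intro sum.cong refl) (auto simp: sum_distrib_left intro!: sum.cong)
    also have "\<dots> = (\<Sum>\<delta>\<in>Dset \<mu>. \<Sum>B\<in>{B. B \<subseteq># N}. if b \<le> 1 \<and> b \<le> k \<and> sum_list \<delta> = a - b then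
          elem_sym (k - b) B * elem_sym_part (map2 (-) \<mu> \<delta>) (N - B) else 0)"
      by (rule sum.swap)
    also have "\<dots> = (\<Sum>\<delta>\<in>Dset \<mu>. if b \<le> 1 \<and> b \<le> k \<and> sum_list \<delta> = a - b then
        (\<Sum>B\<in>{B. B \<subseteq># N}. elem_sym (k - b) B * elem_sym_part (map2 (-) \<mu> \<delta>) (N - B)) else 0)"
      by (intro sum.cong refl) (rule sum_if_const)
    finally show "(\<Sum>B\<in>{B. B \<subseteq># N}.
        (if b \<le> 1 \<and> b \<le> k then elem_sym (k - b) B else 0) *
        (\<Sum>\<delta>\<in>Dset \<mu>. if sum_list \<delta> = a - b then elem_sym_part (map2 (-) \<mu> \<delta>) (N - B) else (0::'a)))
      = (\<Sum>\<delta>\<in>Dset \<mu>. if b \<le> 1 \<and> b \<le> k \<and> sum_list \<delta> = a - b then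
        (\<Sum>B\<in>{B. B \<subseteq># N}. elem_sym (k - b) B * elem_sym_part (map2 (-) \<mu> \<delta>) (N - B)) else 0)" .
  qed
  also have "\<dots> = (\<Sum>b\<in>{0..a}. G b)"
    unfolding G_def X_def
    by (intro sum.cong refl) (auto simp: esp_Cons sf_mult_def)
  also have "\<dots> = (\<Sum>b\<in>{0..a+1}. G b)"
    by (rule sum.mono_neutral_left) (auto simp: G_def)
  also have "\<dots> = (\<Sum>b\<in>{b. b \<le> 1 \<and> b \<le> k}. G b)"
    by (rule sum.mono_neutral_right) (auto simp: G_def intro!: sum.neutral split: if_splits)
  also have "\<dots> = (\<Sum>\<delta>\<in>Dset (k # \<mu>). if sum_list \<delta> = a then elem_sym_part (map2 (-) (k # \<mu>) \<delta>) N else 0)"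
    unfolding sum_Dset_Cons G_def X_def by (intro sum.cong refl) auto
  finally show ?case .
qed

lemma esp_empty: "elem_sym_part \<mu> {#} = (if sum_list \<mu> = 0 then 1 else 0)"
proof (induction \<mu>)
  case Nil then show ?case by (simp add: esp_Nil sf_one_def)
next
  case (Cons k \<mu>)
  have "{A. A \<subseteq># ({#}::nat multiset)} = {{#}}" by auto
  then show ?case using Cons by (simp add: esp_Cons sf_mult_def elem_sym_char)
qed

lemma Dset_le: "\<delta> \<in> Dset \<mu> \<Longrightarrow> sum_list (map2 (-) \<mu> \<delta>) = sum_list \<mu> - sum_list \<delta> \<and> sum_list \<delta> \<le> sum_list \<mu>"
proof (induction \<mu> arbitrary: \<delta>)
  case Nil then show ?case by (simp add: Dset_Nil)
next
  case (Cons k \<mu>)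
  then obtain b \<delta>' where "\<delta> = b # \<delta>'" "b \<le> 1" "b \<le> k" "\<delta>' \<in> Dset \<mu>"
    unfolding Dset_Cons by auto
  with Cons.IH[of \<delta>'] show ?case by auto
qed

lemma Dset_sign: "(\<Sum>\<delta>\<in>Dset \<mu>. (-1::'a::comm_ring_1) ^ sum_list \<delta>) = (if sum_list \<mu> = 0 then 1 else 0)"
proof (induction \<mu>)
  case Nil then show ?case by (simp add: Dset_Nil)
next
  case (Cons k \<mu>)
  have "(\<Sum>\<delta>\<in>Dset (k # \<mu>). (-1::'a) ^ sum_list \<delta>) =
      (\<Sum>b\<in>{b. b \<le> 1 \<and> b \<le> k}. (-1) ^ b) * (\<Sum>\<delta>\<in>Dset \<mu>. (-1) ^ sum_list \<delta>)"
    unfolding sum_Dset_Cons sum_distrib_right by (intro sum.cong refl) (simp add: power_add sum_distrib_left)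
  moreover have "(\<Sum>b\<in>{b. b \<le> 1 \<and> b \<le> k}. (-1::'a) ^ b) = (if k = 0 then 1 else 0)"
  proof (cases "k = 0")
    case True
    then have "{b. b \<le> 1 \<and> b \<le> k} = {0}" by auto
    then show ?thesis using True by simp
  next
    case False
    then have "{b. b \<le> 1 \<and> b \<le> k} = {0, 1}" by auto
    then show ?thesis using False by simp
  qed
  ultimately show ?case using Cons by simp
qed

lemma Dset_zero: "(\<Sum>\<delta>\<in>Dset \<mu>. if sum_list \<delta> = 0 then (1::'a::comm_ring_1) else 0) = 1"
proof (induction \<mu>)
  case Nil then show ?case by (simp add: Dset_Nil)
next
  case (Cons k \<mu>)
  have "(\<Sum>\<delta>\<in>Dset (k # \<mu>). if sum_list \<delta> = 0 then (1::'a) else 0) =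
      (\<Sum>b\<in>{b. b \<le> 1 \<and> b \<le> k}. if b = 0 then 1 else 0) * (\<Sum>\<delta>\<in>Dset \<mu>. if sum_list \<delta> = 0 then (1::'a) else 0)"
    unfolding sum_Dset_Cons sum_distrib_right by (intro sum.cong refl) auto
  moreover have "(\<Sum>b\<in>{b. b \<le> 1 \<and> b \<le> k}. if b = 0 then (1::'a) else 0) = 1"
    by (subst sum.delta) auto
  ultimately show ?case using Cons by simp
qed

lemma Lf_zero: "Lf n (\<lambda>M. 0) = 0"
  using Lf_mult[of n 0 "\<lambda>M. 0"] by simp

lemma Lf_if: "Lf n (\<lambda>M. if P then f M else 0) = (if P then Lf n f else 0)"
  by (cases P) (simp_all add: Lf_zero)

lemma Lf_esp: "sum_list \<mu> = n \<Longrightarrow> Lf n (elem_sym_part \<mu>) = (1::'a::comm_ring_1)"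
proof (induction n arbitrary: \<mu> rule: less_induct)
  case (less n)
  show ?case
  proof (cases "n = 0")
    case True
    then show ?thesis using less.prems by (simp add: Lf.simps esp_empty)
  next
    case False
    have "Lf n (elem_sym_part \<mu>) = (\<Sum>a\<in>{1..n}. (-1)^(a-1) *
        Lf (n-a) (\<lambda>N. elem_sym_part \<mu> (replicate_mset a 0 + image_mset Suc N)))"
      using False by (subst Lf.simps) simp
    also have "\<dots> = (\<Sum>a\<in>{1..n}. (-1)^(a-1) *
        (\<Sum>\<delta>\<in>Dset \<mu>. if sum_list \<delta> = a then Lf (n-a) (elem_sym_part (map2 (-) \<mu> \<delta>)) else (0::'a)))"
      by (intro sum.cong refl) (simp add: esp_RR[unfolded RR_def] Lf_sum finite_Dset Lf_if)
    also have "\<dots> = (\<Sum>a\<in>{1..n}. \<Sum>\<delta>\<in>Dset \<mu>. if sum_list \<delta> = a then (-1)^(a-1) else (0::'a))"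
    proof (intro sum.cong refl)
      fix a assume a: "a \<in> {1..n}"
      show "(-1)^(a-1) * (\<Sum>\<delta>\<in>Dset \<mu>. if sum_list \<delta> = a then Lf (n-a) (elem_sym_part (map2 (-) \<mu> \<delta>)) else (0::'a))
          = (\<Sum>\<delta>\<in>Dset \<mu>. if sum_list \<delta> = a then (-1)^(a-1) else (0::'a))"
        unfolding sum_distrib_left
      proof (intro sum.cong refl)
        fix \<delta> assume d: "\<delta> \<in> Dset \<mu>"
        show "(-1)^(a-1) * (if sum_list \<delta> = a then Lf (n-a) (elem_sym_part (map2 (-) \<mu> \<delta>)) else (0::'a))
            = (if sum_list \<delta> = a then (-1)^(a-1) else 0)"
        proof (cases "sum_list \<delta> = a")
          case True
          have "sum_list (map2 (-) \<mu> \<delta>) = n - a" using Dset_le[OF d] True less.prems by simp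
          then have "Lf (n-a) (elem_sym_part (map2 (-) \<mu> \<delta>)) = (1::'a)"
            using less.IH[of "n - a"] a by auto
          then show ?thesis using True by simp
        qed simp
      qed
    qed
    also have "\<dots> = (\<Sum>\<delta>\<in>Dset \<mu>. \<Sum>a\<in>{1..n}. if sum_list \<delta> = a then (-1)^(a-1) else (0::'a))"
      by (rule sum.swap)
    also have "\<dots> = (\<Sum>\<delta>\<in>Dset \<mu>. (if sum_list \<delta> = 0 then 1 else 0) - (-1) ^ sum_list \<delta>)"
    proof (intro sum.cong refl)
      fix \<delta> assume d: "\<delta> \<in> Dset \<mu>"
      have le: "sum_list \<delta> \<le> n" using Dset_le[OF d] less.prems by simp
      have key: "(\<Sum>a\<in>{1..n}. if s = a then (-1)^(a-1) else (0::'a)) =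
          (if s = 0 then 1 else 0) - (-1) ^ s" if sn: "s \<le> n" for s
      proof (cases s)
        case 0 then show ?thesis by (simp add: sum.neutral)
      next
        case (Suc m)
        have "(\<Sum>a\<in>{1..n}. if s = a then (-1)^(a-1) else (0::'a)) =
          (if s \<in> {1..n} then (-1)^(s-1) else 0)" by (subst sum.delta') auto
        then show ?thesis using Suc sn by simp
      qed
      show "(\<Sum>a\<in>{1..n}. if sum_list \<delta> = a then (-1)^(a-1) else (0::'a)) =
          (if sum_list \<delta> = 0 then 1 else 0) - (-1) ^ sum_list \<delta>" by (rule key[OF le])
    qed
    also have "\<dots> = 1"
      unfolding sum_subtractf using Dset_zero[of \<mu>, where 'a='a] Dset_sign[of \<mu>, where 'a='a] False less.prems by simp
    finally show ?thesis .
  qed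
qed




definition Wset :: "nat \<Rightarrow> nat set \<Rightarrow> nat multiset \<Rightarrow> nat list set" where
  "Wset n S M = {w. length w = n \<and> sorted w \<and> (\<forall>j\<in>S. 0 < j \<and> j < n \<longrightarrow> w ! (j - 1) < w ! j) \<and> mset w = M}"

definition Fset :: "nat \<Rightarrow> nat set \<Rightarrow> 'a::comm_semiring_1 sfun" where
  "Fset n S M = of_nat (card (Wset n S M))"

lemma sorted_split0:
  "sorted (w::nat list) \<Longrightarrow> \<exists>a w'. w = replicate a 0 @ map Suc w' \<and> sorted w'"
proof (induction w)
  case Nil then show ?case by (intro exI[of _ 0] exI[of _ "[]"]) simp
next
  case (Cons x w)
  then obtain a w' where w: "w = replicate a 0 @ map Suc w'" "sorted w'" by auto
  have ge: "\<forall>y\<in>set w. x \<le> y" using Cons.prems by simp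
  show ?case
  proof (cases x)
    case 0
    then show ?thesis using w by (intro exI[of _ "Suc a"] exI[of _ w']) simp
  next
    case (Suc x')
    have "a = 0"
    proof (rule ccontr)
      assume "a \<noteq> 0"
      then have "0 \<in> set w" using w by simp
      then show False using ge Suc by auto
    qed
    then have "x # w = map Suc (x' # w')" using w Suc by simp
    moreover have "sorted (x' # w')" using w ge Suc \<open>a = 0\<close> by auto
    ultimately show ?thesis by (intro exI[of _ 0] exI[of _ "x' # w'"]) simp
  qed
qed

lemma mset_split0: "mset (replicate a 0 @ map Suc w') = RR a (mset w')"
  by (simp add: RR_def)

lemma sorted_split0': "sorted (replicate a 0 @ map Suc (w'::nat list)) \<longleftrightarrow> sorted w'"
  by (auto simp: sorted_append sorted_map)

lemma nth_split0: "i < a + length w' \<Longrightarrow>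
   (replicate a 0 @ map Suc w') ! i = (if i < a then 0 else Suc (w' ! (i - a)))"
  by (simp add: nth_append)

lemma Wset_RR:
  assumes a: "1 \<le> a" "a \<le> n"
  shows "Wset n S (RR a N) = (if (\<forall>j\<in>S. \<not> (0 < j \<and> j < a))
      then (\<lambda>w'. replicate a 0 @ map Suc w') ` Wset (n - a) {j. j + a \<in> S} N else {})"
proof -
  have cond: "(\<forall>j\<in>S. 0 < j \<and> j < n \<longrightarrow> (replicate a 0 @ map Suc w') ! (j - 1) < (replicate a 0 @ map Suc w') ! j)
     \<longleftrightarrow> (\<forall>j\<in>S. \<not> (0 < j \<and> j < a)) \<and> (\<forall>j\<in>{j. j + a \<in> S}. 0 < j \<and> j < n - a \<longrightarrow> w' ! (j - 1) < w' ! j)"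
    if len: "length w' = n - a" for w' :: "nat list"
  proof
    assume h: "\<forall>j\<in>S. 0 < j \<and> j < n \<longrightarrow> (replicate a 0 @ map Suc w') ! (j - 1) < (replicate a 0 @ map Suc w') ! j"
    have 1: "\<forall>j\<in>S. \<not> (0 < j \<and> j < a)"
    proof (intro ballI notI)
      fix j assume "j \<in> S" "0 < j \<and> j < a"
      then show False using h a by (auto simp: nth_append)
    qed
    have 2: "\<forall>j\<in>{j. j + a \<in> S}. 0 < j \<and> j < n - a \<longrightarrow> w' ! (j - 1) < w' ! j"
    proof (intro ballI impI)
      fix j assume j: "j \<in> {j. j + a \<in> S}" "0 < j \<and> j < n - a"
      then have "(replicate a 0 @ map Suc w') ! (j + a - 1) < (replicate a 0 @ map Suc w') ! (j + a)"
        using h a by auto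
      moreover have "(replicate a 0 @ map Suc w') ! (j + a - 1) = Suc (w' ! (j - 1))"
        using j len a by (subst nth_split0) auto
      moreover have "(replicate a 0 @ map Suc w') ! (j + a) = Suc (w' ! j)"
        using j len a by (subst nth_split0) auto
      ultimately show "w' ! (j - 1) < w' ! j" by simp
    qed
    show "(\<forall>j\<in>S. \<not> (0 < j \<and> j < a)) \<and> (\<forall>j\<in>{j. j + a \<in> S}. 0 < j \<and> j < n - a \<longrightarrow> w' ! (j - 1) < w' ! j)"
      using 1 2 by blast
  next
    assume h: "(\<forall>j\<in>S. \<not> (0 < j \<and> j < a)) \<and> (\<forall>j\<in>{j. j + a \<in> S}. 0 < j \<and> j < n - a \<longrightarrow> w' ! (j - 1) < w' ! j)"
    show "\<forall>j\<in>S. 0 < j \<and> j < n \<longrightarrow> (replicate a 0 @ map Suc w') ! (j - 1) < (replicate a 0 @ map Suc w') ! j"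
    proof (intro ballI impI)
      fix j assume j: "j \<in> S" "0 < j \<and> j < n"
      then have "a \<le> j" using h by force
      show "(replicate a 0 @ map Suc w') ! (j - 1) < (replicate a 0 @ map Suc w') ! j"
      proof (cases "j = a")
        case True
        have "(replicate a 0 @ map Suc w') ! (a - 1) = 0" using a by (simp add: nth_append)
        moreover have "(replicate a 0 @ map Suc w') ! a = Suc (w' ! 0)" using a len j True by (simp add: nth_append)
        ultimately show ?thesis using True by simp
      next
        case False
        then have j': "j - a \<in> {j. j + a \<in> S}" "0 < j - a \<and> j - a < n - a"
          using \<open>a \<le> j\<close> j by auto
        then have "w' ! (j - a - 1) < w' ! (j - a)" using h by blast
        moreover have "j - 1 - a = j - a - 1" by simp
        moreover have "(replicate a 0 @ map Suc w') ! (j - 1) = Suc (w' ! (j - a - 1))"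
          using a len j \<open>a \<le> j\<close> False by (subst nth_split0) auto
        moreover have "(replicate a 0 @ map Suc w') ! j = Suc (w' ! (j - a))"
          using a len j \<open>a \<le> j\<close> False by (subst nth_split0) auto
        ultimately show ?thesis by simp
      qed
    qed
  qed
  show ?thesis
  proof (intro equalityI subsetI)
    fix w assume w: "w \<in> Wset n S (RR a N)"
    then have "sorted w" by (simp add: Wset_def)
    then obtain a' w' where w': "w = replicate a' 0 @ map Suc w'" "sorted w'"
      using sorted_split0 by blast
    have "RR a' (mset w') = RR a N" using w w' by (simp add: Wset_def RR_def)
    then have aw: "a' = a" "mset w' = N" by (simp_all add: RR_eq_iff)
    have "a + length w' = n" using w w' aw by (simp add: Wset_def)
    then have len: "length w' = n - a" by simp
    have c: "\<forall>j\<in>S. 0 < j \<and> j < n \<longrightarrow> w ! (j - 1) < w ! j" using w by (simp add: Wset_def)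
    have "(\<forall>j\<in>S. \<not> (0 < j \<and> j < a)) \<and> (\<forall>j\<in>{j. j + a \<in> S}. 0 < j \<and> j < n - a \<longrightarrow> w' ! (j - 1) < w' ! j)"
      using cond[OF len] c w' aw by simp
    then show "w \<in> (if (\<forall>j\<in>S. \<not> (0 < j \<and> j < a))
      then (\<lambda>w'. replicate a 0 @ map Suc w') ` Wset (n - a) {j. j + a \<in> S} N else {})"
      using w' aw len by (auto simp: Wset_def)
  next
    fix w assume w: "w \<in> (if (\<forall>j\<in>S. \<not> (0 < j \<and> j < a))
      then (\<lambda>w'. replicate a 0 @ map Suc w') ` Wset (n - a) {j. j + a \<in> S} N else {})"
    then have c1: "\<forall>j\<in>S. \<not> (0 < j \<and> j < a)" by (simp split: if_splits)
    then obtain w' where w': "w = replicate a 0 @ map Suc w'" "w' \<in> Wset (n - a) {j. j + a \<in> S} N"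
      using w by auto
    have len: "length w' = n - a" using w' by (simp add: Wset_def)
    have "\<forall>j\<in>S. 0 < j \<and> j < n \<longrightarrow> w ! (j - 1) < w ! j"
      using cond[OF len] c1 w' by (simp add: Wset_def)
    then show "w \<in> Wset n S (RR a N)"
      using w' len a by (simp add: Wset_def RR_def sorted_split0')
  qed
qed

lemma Fset_RR:
  assumes a: "1 \<le> a" "a \<le> n"
  shows "Fset n S (RR a N) = (if (\<forall>j\<in>S. \<not> (0 < j \<and> j < a))
      then Fset (n - a) {j. j + a \<in> S} N else 0)"
proof -
  have "inj (\<lambda>w'::nat list. replicate a 0 @ map Suc w')"
    by (auto simp: inj_def)
  then show ?thesis unfolding Fset_def Wset_RR[OF a]
    by (auto simp: card_image inj_on_subset[of _ UNIV])
qed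

lemma alt_sum:
  assumes n: "0 < n"
  shows "(\<Sum>a\<in>{1..n}. (-1::'a::comm_ring_1)^(a-1) *
      (if (\<forall>j\<in>S. \<not> (0 < j \<and> j < a)) \<and> (\<forall>j. 0 < j \<and> j < n - a \<longrightarrow> j + a \<in> S) then 1 else 0))
    = (if \<forall>j. 0 < j \<and> j < n \<longrightarrow> j \<in> S then 1 else 0)"
proof (cases "\<forall>j. 0 < j \<and> j < n \<longrightarrow> j \<in> S")
  case True
  have "(\<Sum>a\<in>{1..n}. (-1::'a)^(a-1) *
      (if (\<forall>j\<in>S. \<not> (0 < j \<and> j < a)) \<and> (\<forall>j. 0 < j \<and> j < n - a \<longrightarrow> j + a \<in> S) then 1 else 0))
     = (\<Sum>a\<in>{1..n}. if a = 1 then 1 else 0)"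
  proof (intro sum.cong refl)
    fix a assume a: "a \<in> {1..n}"
    show "(-1::'a)^(a-1) *
      (if (\<forall>j\<in>S. \<not> (0 < j \<and> j < a)) \<and> (\<forall>j. 0 < j \<and> j < n - a \<longrightarrow> j + a \<in> S) then 1 else 0)
      = (if a = 1 then 1 else 0)"
    proof (cases "a = 1")
      case True
      then show ?thesis using \<open>\<forall>j. 0 < j \<and> j < n \<longrightarrow> j \<in> S\<close> by auto
    next
      case False
      then have "1 \<in> S" "0 < (1::nat) \<and> 1 < a" using a \<open>\<forall>j. 0 < j \<and> j < n \<longrightarrow> j \<in> S\<close> by auto
      then show ?thesis using False by auto
    qed
  qed
  also have "\<dots> = 1" using n by (subst sum.delta) auto
  finally show ?thesis using True by simp
next
  case False
  define T where "T = {j. 0 < j \<and> j < n \<and> j \<notin> S}"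
  have "T \<noteq> {}" using False by (auto simp: T_def)
  moreover have "finite T" by (auto simp: T_def)
  ultimately have tT: "Max T \<in> T" by simp
  define t where "t = Max T"
  have t: "0 < t" "t < n" "t \<notin> S" using tT by (auto simp: t_def T_def)
  have above: "j \<in> S" if "t < j" "j < n" for j
  proof (rule ccontr)
    assume "j \<notin> S"
    then have "j \<in> T" using that t by (auto simp: T_def)
    then have "j \<le> t" unfolding t_def using \<open>finite T\<close> by simp
    then show False using that by simp
  qed
  define h where "h a = (-1::'a)^(a-1) *
      (if (\<forall>j\<in>S. \<not> (0 < j \<and> j < a)) \<and> (\<forall>j. 0 < j \<and> j < n - a \<longrightarrow> j + a \<in> S) then 1 else 0)" for a
  have "(\<Sum>a\<in>{1..n}. h a) = (\<Sum>a\<in>{t, t+1}. h a)"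
  proof (rule sum.mono_neutral_right)
    show "{t, t + 1} \<subseteq> {1..n}" using t by auto
    show "\<forall>a\<in>{1..n} - {t, t + 1}. h a = 0"
    proof
      fix a assume a: "a \<in> {1..n} - {t, t + 1}"
      show "h a = 0"
      proof (cases "a < t")
        case True
        then have "0 < t - a \<and> t - a < n - a" "t - a + a \<notin> S" using t by auto
        then have "((\<forall>j\<in>S. \<not> (0 < j \<and> j < a)) \<and> (\<forall>j. 0 < j \<and> j < n - a \<longrightarrow> j + a \<in> S)) = False" by blast
        then show ?thesis unfolding h_def by (simp only: if_False mult_zero_right)
      next
        case False
        then have "t + 1 < a" using a by auto
        then have "t + 1 \<in> S" "0 < t + 1 \<and> t + 1 < a" using above[of "t+1"] a by auto
        then show ?thesis unfolding h_def by auto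
      qed
    qed
  qed simp
  also have "\<dots> = 0"
  proof -
    have c2t: "\<forall>j. 0 < j \<and> j < n - t \<longrightarrow> j + t \<in> S" using above by auto
    have c2t1: "\<forall>j. 0 < j \<and> j < n - (t + 1) \<longrightarrow> j + (t + 1) \<in> S" using above by auto
    have c1: "(\<forall>j\<in>S. \<not> (0 < j \<and> j < t + 1)) \<longleftrightarrow> (\<forall>j\<in>S. \<not> (0 < j \<and> j < t))"
      using t(3) less_Suc_eq by auto
    obtain m where m: "t = Suc m" using t(1) gr0_implies_Suc by blast
    show ?thesis unfolding h_def using c2t c2t1 c1 m by auto
  qed
  finally show ?thesis using False unfolding h_def by simp
qed

lemma Lf_Fset: "Lf n (Fset n S) = (if \<forall>j. 0 < j \<and> j < n \<longrightarrow> j \<in> S then (1::'a::comm_ring_1) else 0)"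
proof (induction n arbitrary: S rule: less_induct)
  case (less n)
  show ?case
  proof (cases "n = 0")
    case True
    have "Wset 0 S {#} = {[]}" by (auto simp: Wset_def)
    then show ?thesis using True by (simp add: Lf.simps Fset_def)
  next
    case False
    have "Lf n (Fset n S) = (\<Sum>a\<in>{1..n}. (-1)^(a-1) *
        Lf (n-a) (\<lambda>N. Fset n S (RR a N)))"
      using False by (subst Lf.simps) (simp add: RR_def)
    also have "\<dots> = (\<Sum>a\<in>{1..n}. (-1::'a)^(a-1) *
      (if (\<forall>j\<in>S. \<not> (0 < j \<and> j < a)) \<and> (\<forall>j. 0 < j \<and> j < n - a \<longrightarrow> j + a \<in> S) then 1 else 0))"
    proof (intro sum.cong refl)
      fix a assume a: "a \<in> {1..n}"
      have "Lf (n-a) (\<lambda>N. Fset n S (RR a N)) =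
          Lf (n-a) (\<lambda>N. if (\<forall>j\<in>S. \<not> (0 < j \<and> j < a)) then Fset (n - a) {j. j + a \<in> S} N else 0)"
        using a by (simp add: Fset_RR)
      also have "\<dots> = (if (\<forall>j\<in>S. \<not> (0 < j \<and> j < a)) then Lf (n - a) (Fset (n - a) {j. j + a \<in> S}) else (0::'a))"
        by (rule Lf_if)
      also have "\<dots> = (if (\<forall>j\<in>S. \<not> (0 < j \<and> j < a)) \<and> (\<forall>j. 0 < j \<and> j < n - a \<longrightarrow> j + a \<in> S) then 1 else 0)"
        using less.IH[of "n - a" "{j. j + a \<in> S}"] a by auto
      finally show "(-1)^(a-1) * Lf (n-a) (\<lambda>N. Fset n S (RR a N)) = (-1::'a)^(a-1) *
        (if (\<forall>j\<in>S. \<not> (0 < j \<and> j < a)) \<and> (\<forall>j. 0 < j \<and> j < n - a \<longrightarrow> j + a \<in> S) then 1 else 0)"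
        by simp
    qed
    also have "\<dots> = (if \<forall>j. 0 < j \<and> j < n \<longrightarrow> j \<in> S then 1 else 0)"
      using False by (intro alt_sum) simp
    finally show ?thesis .
  qed
qed




lemma tele:
  assumes "sorted (ps::nat list)" "k < length ps"
  shows "sum_list (take (Suc k) (map2 (-) ps (0 # ps))) = ps ! k"
  using assms(2)
proof (induction k)
  case 0
  then obtain p ps' where "ps = p # ps'" by (cases ps) auto
  then show ?case by simp
next
  case (Suc k)
  have len: "length (map2 (-) ps (0 # ps)) = length ps" by simp
  have "take (Suc (Suc k)) (map2 (-) ps (0 # ps)) = take (Suc k) (map2 (-) ps (0 # ps)) @ [map2 (-) ps (0 # ps) ! Suc k]"
    using Suc.prems by (subst take_Suc_conv_app_nth) (simp_all add: len)
  moreover have "map2 (-) ps (0 # ps) ! Suc k = ps ! Suc k - ps ! k"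
    using Suc.prems by simp
  moreover have "ps ! k \<le> ps ! Suc k" using assms(1) Suc.prems by (simp add: sorted_iff_nth_mono)
  ultimately show ?case using Suc by simp
qed

lemma comp_of_set_props:
  assumes S: "\<forall>j\<in>S. 0 < j \<and> j < n" and n: "0 < n"
  shows "sum_list (comp_of_set n S) = n" "comp_set (comp_of_set n S) = S"
proof -
  have "S \<subseteq> {..<n}" using S by auto
  then have fin: "finite S" using finite_subset by blast
  define ps where "ps = sorted_list_of_set S @ [n]"
  have sorted: "sorted ps" unfolding ps_def using S fin by (auto simp: sorted_append less_imp_le)
  have cs: "comp_of_set n S = map2 (-) ps (0 # ps)" using n by (simp add: comp_of_set_def ps_def Let_def)
  have lenb: "length (map2 (-) ps (0 # ps)) = length ps" by simp
  have lenps: "length ps = Suc (length (sorted_list_of_set S))" by (simp add: ps_def)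
  have "sum_list (map2 (-) ps (0 # ps)) = sum_list (take (Suc (length ps - 1)) (map2 (-) ps (0 # ps)))"
    using lenps lenb by simp
  also have "\<dots> = ps ! (length ps - 1)" using sorted lenps by (intro tele) auto
  also have "\<dots> = n" by (simp add: ps_def nth_append)
  finally show "sum_list (comp_of_set n S) = n" using cs by simp
  have "comp_set (comp_of_set n S) = (\<lambda>k. sum_list (take k (map2 (-) ps (0 # ps)))) ` {1..<length ps}"
    using cs lenb by (simp add: comp_set_def)
  also have "\<dots> = (\<lambda>k. ps ! (k - 1)) ` {1..<length ps}"
  proof (rule image_cong[OF refl])
    fix k assume k: "k \<in> {1..<length ps}"
    then have "Suc (k - 1) = k" by simp
    then show "sum_list (take k (map2 (-) ps (0 # ps))) = ps ! (k - 1)"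
      using tele[OF sorted, of "k - 1"] k by simp
  qed
  also have "\<dots> = (\<lambda>i. sorted_list_of_set S ! i) ` {..<length (sorted_list_of_set S)}"
  proof (intro equalityI subsetI)
    fix x assume "x \<in> (\<lambda>k. ps ! (k - 1)) ` {1..<length ps}"
    then obtain k where k: "k \<in> {1..<length ps}" "x = ps ! (k - 1)" by auto
    then show "x \<in> (\<lambda>i. sorted_list_of_set S ! i) ` {..<length (sorted_list_of_set S)}"
      using lenps by (auto simp: ps_def nth_append)
  next
    fix x assume "x \<in> (\<lambda>i. sorted_list_of_set S ! i) ` {..<length (sorted_list_of_set S)}"
    then obtain i where i: "i < length (sorted_list_of_set S)" "x = sorted_list_of_set S ! i" by auto
    then have "x = ps ! (Suc i - 1)" "Suc i \<in> {1..<length ps}" using lenps by (auto simp: ps_def nth_append)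
    then show "x \<in> (\<lambda>k. ps ! (k - 1)) ` {1..<length ps}" by blast
  qed
  also have "\<dots> = set (sorted_list_of_set S)" by (auto simp: in_set_conv_nth)
  also have "\<dots> = S" using fin by simp
  finally show "comp_set (comp_of_set n S) = S" .
qed

lemma gessel_comp_of_set:
  assumes S: "\<forall>j\<in>S. 0 < j \<and> j < n"
  shows "gessel_F (comp_of_set n S) M = Fset n S M"
proof (cases "n = 0")
  case True
  then have "S = {}" using S by auto
  then show ?thesis using True
    by (simp add: gessel_F_def Fset_def Wset_def comp_of_set_def comp_set_def)
next
  case False
  then have n: "0 < n" by simp
  show ?thesis unfolding gessel_F_def Fset_def Wset_def comp_of_set_props[OF S n]
    using S by (intro arg_cong[where f="\<lambda>A. of_nat (card A)"] Collect_cong) auto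
qed




lemma length_xcoord_aux: "length (xcoord_aux e s) = length (filter id s)"
  by (induction e s rule: xcoord_aux.induct) auto

lemma dyck_len: "dyck_path n D \<Longrightarrow> length (xcoord D) = n"
  by (simp add: dyck_path_def xcoord_def length_xcoord_aux)

lemma area_nth: "i < length (xcoord D) \<Longrightarrow> area D ! i = i - xcoord D ! i"
  by (simp add: area_def)

definition RL :: "(nat \<Rightarrow> nat) \<Rightarrow> nat \<Rightarrow> nat \<Rightarrow> nat list" where
  "RL ar n m = concat (map (\<lambda>k. rev (filter (\<lambda>i. ar i = k) [0..<n])) (rev [0..<m]))"

lemma RL_Suc: "RL ar n (Suc m) = rev (filter (\<lambda>i. ar i = m) [0..<n]) @ RL ar n m"
  by (simp add: RL_def)

lemma set_RL: "set (RL ar n m) = {i. i < n \<and> ar i < m}"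
proof (induction m)
  case 0 then show ?case by (simp add: RL_def)
next
  case (Suc m) then show ?case by (auto simp: RL_Suc less_Suc_eq)
qed

lemma sorted_RL: "sorted_wrt (\<lambda>i j. ar j < ar i \<or> (ar i = ar j \<and> j < i)) (RL ar n m)"
proof (induction m)
  case 0 then show ?case by (simp add: RL_def)
next
  case (Suc m)
  have "sorted_wrt (<) (filter (\<lambda>i. ar i = m) [0..<n])"
    by (rule sorted_wrt_filter) simp
  then have "sorted_wrt (\<lambda>i j. ar j < ar i \<or> (ar i = ar j \<and> j < i)) (rev (filter (\<lambda>i. ar i = m) [0..<n]))"
    by (simp add: sorted_wrt_rev) (rule sorted_wrt_mono_rel[rotated], auto)
  then show ?case using Suc by (simp add: RL_Suc sorted_wrt_append set_RL)
qed

lemma sorted_wrt_irrefl_distinct: "sorted_wrt P xs \<Longrightarrow> (\<And>x. \<not> P x x) \<Longrightarrow> distinct xs"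
  by (induction xs) auto

lemma distinct_RL: "distinct (RL ar n m)"
  by (rule sorted_wrt_irrefl_distinct[OF sorted_RL]) auto

lemma pos_in_nth: "distinct L \<Longrightarrow> p < length L \<Longrightarrow> pos_in L (L ! p) = p"
  unfolding pos_in_def
  by (rule Least_equality) (auto simp: nth_eq_iff_index_eq)

lemma pos_in_set: "v \<in> set L \<Longrightarrow> pos_in L v < length L \<and> L ! pos_in L v = v"
proof -
  assume "v \<in> set L"
  then obtain p where "p < length L" "L ! p = v" by (auto simp: in_set_conv_nth)
  then have "\<exists>p. p < length L \<and> L ! p = v" by blast
  then show ?thesis unfolding pos_in_def by (rule LeastI_ex)
qed

lemma pcompose_monom1: "monom 1 d \<circ>\<^sub>p q = q ^ d"
  by (induction d) (simp_all add: monom_Suc pcompose_pCons pcompose_1)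

lemma pcompose_of_nat: "(of_nat k :: 'a::comm_ring_1 poly) \<circ>\<^sub>p q = of_nat k"
  by (induction k) (simp_all add: pcompose_add pcompose_1)




lemma rev_upt_nth: "p < n \<Longrightarrow> rev [1..<n+1] ! p = n - p"
  by (simp add: rev_nth nth_upt del: upt_Suc)

lemma desc_rev:
  assumes d: "distinct \<sigma>" and l: "length \<sigma> = n" and s: "set \<sigma> = {1..n}"
  shows "(\<forall>i. 0 < i \<and> i < n \<longrightarrow> pos_in \<sigma> (i+1) < pos_in \<sigma> i) \<longleftrightarrow> \<sigma> = rev [1..<n+1]"
proof
  assume h: "\<forall>i. 0 < i \<and> i < n \<longrightarrow> pos_in \<sigma> (i+1) < pos_in \<sigma> i"
  define f where "f v = pos_in \<sigma> v" for v
  have fv: "f v < n \<and> \<sigma> ! f v = v" if "1 \<le> v" "v \<le> n" for v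
    using pos_in_set[of v \<sigma>] that s l by (auto simp: f_def)
  have up: "f v \<le> n - v" if "1 \<le> v" "v \<le> n" for v
    using that(1)
  proof (induction v rule: dec_induct)
    case base then show ?case using fv[of 1] that by auto
  next
    case (step m)
    have "f (m+1) < f m" using h step.hyps that unfolding f_def by auto
    then show ?case using step.IH by simp
  qed
  have lo: "n - v \<le> f v" if "1 \<le> v" "v \<le> n" for v
    using that(2)
  proof (induction v rule: inc_induct)
    case base then show ?case by simp
  next
    case (step m)
    have "f (Suc m) < f m" using h step.hyps that unfolding f_def by auto
    then show ?case using step.IH by simp
  qed
  show "\<sigma> = rev [1..<n+1]"
  proof (rule nth_equalityI)
    show "length \<sigma> = length (rev [1..<n+1])" using l by simp
    fix p assume p: "p < length \<sigma>"
    then have v: "1 \<le> n - p" "n - p \<le> n" using l by auto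
    have "f (n - p) = n - (n - p)" using up[OF v] lo[OF v] by simp
    then have "f (n - p) = p" using p l by simp
    then have "\<sigma> ! p = n - p" using fv[OF v] by simp
    moreover have "rev [1..<n+1] ! p = n - p" using p l by (intro rev_upt_nth) simp
    ultimately show "\<sigma> ! p = rev [1..<n+1] ! p" by (simp only:)
  qed
next
  assume e: "\<sigma> = rev [1..<n+1]"
  have pv: "pos_in \<sigma> v = n - v" if "1 \<le> v" "v \<le> n" for v
  proof -
    have "rev [1..<n+1] ! (n - v) = n - (n - v)" using that by (intro rev_upt_nth) simp
    then have "\<sigma> ! (n - v) = v" using e that by simp
    then show ?thesis using pos_in_nth[OF d, of "n - v"] l that by simp
  qed
  show "\<forall>i. 0 < i \<and> i < n \<longrightarrow> pos_in \<sigma> (i+1) < pos_in \<sigma> i"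
    using pv by auto
qed

lemma lc: "concat (map (\<lambda>i. if P i then [c ! i] else []) xs) = map (nth c) (filter P xs)"
  by (induction xs) auto




context
  fixes n :: nat and D :: "bool list"
  assumes dyck: "dyck_path n D"
begin

definition "LL = RL (\<lambda>i. area D ! i) n n"

lemma lenx: "length (xcoord D) = n" using dyck by (rule dyck_len)

lemma area_lt: "i < n \<Longrightarrow> area D ! i < n"
  using area_nth[of i D] lenx by simp

lemma set_LL: "set LL = {0..<n}"
  using area_lt by (auto simp: LL_def set_RL)

lemma distinct_LL: "distinct LL"
  by (simp add: LL_def distinct_RL)

lemma length_LL: "length LL = n"
  using distinct_card[OF distinct_LL] set_LL by simp

lemma sigma_LL: "sigma_pf n D c = map (nth c) LL"
  by (simp add: sigma_pf_def LL_def RL_def lc map_concat rev_map o_def)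

definition "c0 = map (\<lambda>i. n - pos_in LL i) [0..<n]"

lemma pos_LL: "i < n \<Longrightarrow> pos_in LL i < n \<and> LL ! pos_in LL i = i"
  using pos_in_set[of i LL] set_LL length_LL by auto

lemma sigma_c0: "sigma_pf n D c0 = rev [1..<n+1]"
proof (rule nth_equalityI)
  show "length (sigma_pf n D c0) = length (rev [1..<n+1])" by (simp add: sigma_LL length_LL)
  fix p assume "p < length (sigma_pf n D c0)"
  then have p: "p < n" by (simp add: sigma_LL length_LL)
  have "LL ! p < n" using p set_LL length_LL nth_mem by fastforce
  then have "sigma_pf n D c0 ! p = n - pos_in LL (LL ! p)"
    using p by (simp add: sigma_LL length_LL c0_def)
  also have "\<dots> = n - p" using pos_in_nth[OF distinct_LL] p length_LL by simp
  moreover have "rev [1..<n+1] ! p = n - p" using p by (rule rev_upt_nth)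
  ultimately show "sigma_pf n D c0 ! p = rev [1..<n+1] ! p" by (simp only:)
qed

lemma c0_PF: "c0 \<in> parking_functions n D"
proof -
  have len: "length c0 = n" by (simp add: c0_def)
  have setc: "set c0 = {1..n}"
  proof (intro equalityI subsetI)
    fix v assume "v \<in> set c0"
    then obtain i where "i < n" "v = n - pos_in LL i" by (auto simp: c0_def)
    then show "v \<in> {1..n}" using pos_LL by fastforce
  next
    fix v assume v: "v \<in> {1..n}"
    define p where "p = n - v"
    have p: "p < n" using v by (auto simp: p_def)
    have i: "LL ! p < n" using p set_LL length_LL nth_mem by fastforce
    have "c0 ! (LL ! p) = n - p"
      using i p pos_in_nth[OF distinct_LL] length_LL by (simp add: c0_def)
    then have cv: "c0 ! (LL ! p) = v" using v by (simp add: p_def)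
    show "v \<in> set c0" using nth_mem[of "LL ! p" c0] i len cv by simp
  qed
  have dist: "distinct c0" using setc len by (simp add: card_distinct)
  have col: "c0 ! i < c0 ! j" if ij: "i < j" "j < n" "xcoord D ! i = xcoord D ! j" for i j
  proof -
    have pi: "pos_in LL i < n" "LL ! pos_in LL i = i" using pos_LL ij by auto
    have pj: "pos_in LL j < n" "LL ! pos_in LL j = j" using pos_LL ij by auto
    have ne: "pos_in LL i \<noteq> pos_in LL j"
    proof
      assume "pos_in LL i = pos_in LL j"
      then have "LL ! pos_in LL i = LL ! pos_in LL j" by simp
      then show False using pi pj ij by simp
    qed
    have "\<not> pos_in LL i < pos_in LL j"
    proof
      assume lt: "pos_in LL i < pos_in LL j"
      have "sorted_wrt (\<lambda>i j. area D ! j < area D ! i \<or> (area D ! i = area D ! j \<and> j < i)) LL"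
        unfolding LL_def by (rule sorted_RL)
      then have "area D ! (LL ! pos_in LL j) < area D ! (LL ! pos_in LL i) \<or>
          (area D ! (LL ! pos_in LL i) = area D ! (LL ! pos_in LL j) \<and> (LL ! pos_in LL j) < (LL ! pos_in LL i))"
        using lt pj(1) length_LL unfolding sorted_wrt_iff_nth_less by simp
      then have "area D ! j < area D ! i \<or> (area D ! i = area D ! j \<and> j < i)"
        using pi(2) pj(2) by simp
      moreover have "area D ! i = i - xcoord D ! i" "area D ! j = j - xcoord D ! j"
        using ij lenx by (simp_all add: area_nth)
      ultimately show False using ij by auto
    qed
    then have "pos_in LL j < pos_in LL i" using ne by simp
    then show ?thesis using ij pi by (simp add: c0_def)
  qed
  show ?thesis unfolding parking_functions_def using len setc dist col by blast
qed

lemma c0_unique: "c \<in> parking_functions n D \<Longrightarrow> sigma_pf n D c = rev [1..<n+1] \<Longrightarrow> c = c0"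
proof -
  assume c: "c \<in> parking_functions n D" and s: "sigma_pf n D c = rev [1..<n+1]"
  have e: "map (nth c) LL = map (nth c0) LL" using s sigma_c0 by (simp add: sigma_LL)
  show "c = c0"
  proof (rule nth_equalityI)
    show "length c = length c0" using c by (simp add: parking_functions_def c0_def)
    fix i assume "i < length c"
    then have i: "i < n" using c by (simp add: parking_functions_def)
    then have "pos_in LL i < length LL" "LL ! pos_in LL i = i" using pos_LL length_LL by auto
    then show "c ! i = c0 ! i" using arg_cong[OF e, of "\<lambda>xs. xs ! pos_in LL i"] by simp
  qed
qed

lemma dinv_path_c0: "dinv_path n D = dinv_pf n D c0"
proof -
  have "(THE c. c \<in> parking_functions n D \<and> sigma_pf n D c = rev [1..<n+1]) = c0"
  proof (rule the_equality)
    show "c0 \<in> parking_functions n D \<and> sigma_pf n D c0 = rev [1..<n+1]" using c0_PF sigma_c0 by simp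
    fix c assume "c \<in> parking_functions n D \<and> sigma_pf n D c = rev [1..<n+1]"
    then show "c = c0" using c0_unique by blast
  qed
  then show ?thesis by (simp add: dinv_path_def)
qed

lemma sigma_perm:
  assumes c: "c \<in> parking_functions n D"
  shows "distinct (sigma_pf n D c) \<and> length (sigma_pf n D c) = n \<and> set (sigma_pf n D c) = {1..n}"
proof -
  have cl: "length c = n" "distinct c" "set c = {1..n}" using c by (auto simp: parking_functions_def)
  have inj: "inj_on (nth c) (set LL)"
    using cl set_LL by (intro inj_on_nth) auto
  have im: "nth c ` {0..<length c} = set c" by (auto simp: in_set_conv_nth)
  have "set (sigma_pf n D c) = nth c ` {0..<n}" by (simp add: sigma_LL set_LL)
  also have "\<dots> = set c" using im cl(1) by simp
  finally show ?thesis using inj distinct_LL cl by (simp add: sigma_LL length_LL distinct_map)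
qed

lemma finite_PF: "finite (parking_functions n D)"
proof -
  have "parking_functions n D \<subseteq> {c. set c \<subseteq> {1..n} \<and> length c = n}"
    by (auto simp: parking_functions_def)
  moreover have "finite {c. set c \<subseteq> {1..n} \<and> length c = n}"
    by (rule finite_lists_length_eq) simp
  ultimately show ?thesis by (rule finite_subset)
qed

lemma Lf_pides:
  assumes c: "c \<in> parking_functions n D"
  shows "Lf n (gessel_F (pides n D c)) = (if c = c0 then (1::'a::comm_ring_1) else 0)"
proof -
  define S where "S = {i. 1 \<le> i \<and> i < n \<and> pos_in (sigma_pf n D c) i > pos_in (sigma_pf n D c) (i + 1)}"
  have S: "\<forall>j\<in>S. 0 < j \<and> j < n" by (auto simp: S_def)
  have "gessel_F (pides n D c) = (Fset n S :: 'a sfun)"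
    unfolding pides_def S_def[symmetric] by (intro ext) (rule gessel_comp_of_set[OF S])
  then have "Lf n (gessel_F (pides n D c)) = (if \<forall>j. 0 < j \<and> j < n \<longrightarrow> j \<in> S then (1::'a) else 0)"
    by (simp add: Lf_Fset)
  moreover have "(\<forall>j. 0 < j \<and> j < n \<longrightarrow> j \<in> S) \<longleftrightarrow> sigma_pf n D c = rev [1..<n+1]"
    using desc_rev[of "sigma_pf n D c" n] sigma_perm[OF c] by (auto simp: S_def)
  moreover have "sigma_pf n D c = rev [1..<n+1] \<longleftrightarrow> c = c0"
  proof
    assume "sigma_pf n D c = rev [1..<n+1]" then show "c = c0" using c0_unique[OF c] by blast
  next
    assume "c = c0" then show "sigma_pf n D c = rev [1..<n+1]" using sigma_c0 by simp
  qed
  ultimately show ?thesis by simp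
qed

end




lemma Lf_sum': "Lf n (\<lambda>M. \<Sum>x\<in>X. g x M) = (\<Sum>x\<in>X. Lf n (g x))"
proof (cases "finite X")
  case True then show ?thesis by (rule Lf_sum)
next
  case False then show ?thesis by (simp add: Lf_zero)
qed

theorem proposition3p1:
  fixes n :: nat and D :: "bool list" and P :: "nat list \<Rightarrow> int poly"
  assumes "dyck_path n D"
    and "\<forall>M. LLT_shift n D M = (\<Sum>\<mu>\<in>partitions n. P \<mu> * elem_sym_part \<mu> M)"
  shows "(\<Sum>\<mu>\<in>partitions n. P \<mu>) = [:1, 1:] ^ dinv_path n D"
proof -
  have e: "Lf n (elem_sym_part \<mu>) = (1::int poly)" if "\<mu> \<in> partitions n" for \<mu>
    using that by (intro Lf_esp) (simp add: partitions_def)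
  have L: "LLT_shift n D M = (\<Sum>c\<in>parking_functions n D. [:1,1:] ^ dinv_pf n D c * gessel_F (pides n D c) M)" for M
    by (simp add: LLT_shift_def LLT_def pcompose_sum pcompose_mult pcompose_monom1 gessel_F_def pcompose_of_nat)
  have "(\<Sum>\<mu>\<in>partitions n. P \<mu>) = (\<Sum>\<mu>\<in>partitions n. P \<mu> * Lf n (elem_sym_part \<mu>))"
    using e by simp
  also have "\<dots> = (\<Sum>\<mu>\<in>partitions n. Lf n (\<lambda>M. P \<mu> * elem_sym_part \<mu> M))"
    by (simp add: Lf_mult)
  also have "\<dots> = Lf n (\<lambda>M. \<Sum>\<mu>\<in>partitions n. P \<mu> * elem_sym_part \<mu> M)"
    by (rule Lf_sum'[symmetric])
  also have "(\<lambda>M. \<Sum>\<mu>\<in>partitions n. P \<mu> * elem_sym_part \<mu> M) =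
      (\<lambda>M. \<Sum>c\<in>parking_functions n D. [:1,1:] ^ dinv_pf n D c * gessel_F (pides n D c) M)"
    using assms(2) L by simp
  also have "Lf n \<dots> = (\<Sum>c\<in>parking_functions n D. [:1,1:] ^ dinv_pf n D c * Lf n (gessel_F (pides n D c)))"
    by (simp add: Lf_sum' Lf_mult)
  also have "\<dots> = (\<Sum>c\<in>parking_functions n D. if c = c0 n D then [:1,1:] ^ dinv_pf n D c else 0)"
  proof (intro sum.cong refl)
    fix c assume c: "c \<in> parking_functions n D"
    show "([:1,1:] :: int poly) ^ dinv_pf n D c * Lf n (gessel_F (pides n D c)) =
        (if c = c0 n D then [:1,1:] ^ dinv_pf n D c else 0)"
      unfolding Lf_pides[OF assms(1) c, where 'a="int poly"] by simp
  qed
  also have "\<dots> = [:1,1:] ^ dinv_pf n D (c0 n D)"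
    using finite_PF[OF assms(1)] c0_PF[OF assms(1)] by simp
  also have "\<dots> = [:1,1:] ^ dinv_path n D"
    using dinv_path_c0[OF assms(1)] by simp
  finally show ?thesis .
qed



end
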